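(* Let $\mu^\ast$ be an upper quasi-density on $\mathbb{H}$, and let $X\subseteq Y\subseteq\mathbb{H}$, where $Y$ has finite symmetric difference with a finite union of sets of the form $q\cdot\mathbb{H}+r$ ($q\in\mathbb{N}^+$, $r\in\mathbb{N}$) (equivalently: there are $k\in\mathbb{N}^+$ and $\mathcal{H}\subseteq\{0,1,\dots,k-1\}$ such that $Y\,\triangle\,\bigcup_{h\in\mathcal{H}}(k\cdot\mathbb{H}+h)$ is finite; this includes the case where $Y$ itself is such a finite union). Then $\mu^\ast(X)\le\mu^\ast(Y)$.
   Context: $\mathbb{N}=\{0,1,2,\dots\}$, $\mathbb{N}^+=\{1,2,\dots\}$; $\mathbb{H}$ is one of $\mathbb{Z},\mathbb{N},\mathbb{N}^+$. For $X\subseteq\mathbb{H}$, $k\in\mathbb{N}^+$, $h\in\mathbb{N}$, $k\cdot X+h:=\{kx+h:x\in X\}$. An upper quasi-density on $\mathbb{H}$ is a function $\mu^\ast:\mathcal{P}(\mathbb{H})\to\mathbb{R}$ with $\mu^\ast(\mathbb{H})=1$, $\mu^\ast(X)\le1$ for all $X$, $\mu^\ast(X\cup Y)\le\mu^\ast(X)+\mu^\ast(Y)$ for all $X,Y$, and $\mu^\ast(k\cdot X+h)=\frac1k\mu^\ast(X)$ for all $X\subseteq\mathbb{H}$, $h,k\in\mathbb{N}^+$. *)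

theory Defs
  imports Complex_Main
begin

text \<open>The ambient set H is one of Z, N, N+, all modelled as subsets of int.\<close>
definition admissible_H :: "int set \<Rightarrow> bool" where
  "admissible_H H \<longleftrightarrow> H = UNIV \<or> H = {0..} \<or> H = {1..}"

definition dil :: "nat \<Rightarrow> int set \<Rightarrow> nat \<Rightarrow> int set" where
  "dil k X h = (\<lambda>x. int k * x + int h) ` X"

definition upper_quasi_density :: "int set \<Rightarrow> (int set \<Rightarrow> real) \<Rightarrow> bool" where
  "upper_quasi_density H mu \<longleftrightarrow>
     mu H = 1 \<and>
     (\<forall>X. X \<subseteq> H \<longrightarrow> mu X \<le> 1) \<and>
     (\<forall>X Y. X \<subseteq> H \<longrightarrow> Y \<subseteq> H \<longrightarrow> mu (X \<union> Y) \<le> mu X + mu Y) \<and>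
     (\<forall>X k h. X \<subseteq> H \<longrightarrow> k > 0 \<longrightarrow> h > 0 \<longrightarrow> mu (dil k X h) = mu X / real k)"

end

theory Submission
  imports Defs
begin

lemma mem_dil: "z \<in> dil k A h \<longleftrightarrow> (\<exists>x\<in>A. z = int k * x + int h)"
  by (auto simp: dil_def)

lemma uqd_sub: "upper_quasi_density H mu \<Longrightarrow> X \<subseteq> H \<Longrightarrow> Y \<subseteq> H \<Longrightarrow> mu (X \<union> Y) \<le> mu X + mu Y"
  unfolding upper_quasi_density_def by blast
lemma uqd_dil: "upper_quasi_density H mu \<Longrightarrow> X \<subseteq> H \<Longrightarrow> k > 0 \<Longrightarrow> h > 0 \<Longrightarrow> mu (dil k X h) = mu X / real k"
  unfolding upper_quasi_density_def by blast
lemma uqd_le1: "upper_quasi_density H mu \<Longrightarrow> X \<subseteq> H \<Longrightarrow> mu X \<le> 1"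
  unfolding upper_quasi_density_def by blast

lemma uqd_empty:
  assumes "upper_quasi_density H mu" shows "mu {} = 0"
proof -
  have "mu (dil 2 {} 1) = mu {} / real 2" using uqd_dil[OF assms, of "{}" 2 1] by simp
  moreover have "dil 2 {} 1 = {}" by (simp add: dil_def)
  ultimately show ?thesis by simp
qed

lemma uqd_nonneg:
  assumes "upper_quasi_density H mu" "X \<subseteq> H" shows "mu X \<ge> 0"
proof -
  have "mu (X \<union> X) \<le> mu X + mu X" using uqd_sub[OF assms(1,2,2)] .
  thus ?thesis by simp
qed

lemma uqd_single:
  assumes "upper_quasi_density H mu" "y \<in> H" shows "mu {y} = 0"
proof -
  define z where "z = 2 * \<bar>y\<bar> + 1"
  have e1: "int (nat (z - y)) = z - y" "int (nat (z - 2*y)) = z - 2*y" unfolding z_def by auto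
  have d1: "dil 1 {y} (nat (z - y)) = {z}" unfolding dil_def using e1 by simp
  have d2: "dil 2 {y} (nat (z - 2*y)) = {z}" unfolding dil_def using e1 by simp
  have p1: "nat (z - y) > 0" "nat (z - 2*y) > 0" unfolding z_def by auto
  have "mu (dil 1 {y} (nat (z - y))) = mu {y} / real 1"
    using uqd_dil[OF assms(1), of "{y}"] assms p1 by simp
  moreover have "mu (dil 2 {y} (nat (z - 2*y))) = mu {y} / real 2"
    using uqd_dil[OF assms(1), of "{y}"] assms p1 by simp
  ultimately show ?thesis using d1 d2 by simp
qed

lemma uqd_finite:
  assumes "upper_quasi_density H mu" "finite E" "E \<subseteq> H" shows "mu E \<le> 0"
  using assms(2,3)
proof (induction E rule: finite_induct)
  case empty then show ?case using uqd_empty[OF assms(1)] by simp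
next
  case (insert x F)
  have "mu ({x} \<union> F) \<le> mu {x} + mu F"
    using uqd_sub[OF assms(1), of "{x}" F] insert by simp
  then show ?case using insert uqd_single[OF assms(1), of x] by simp
qed

lemma uqd_union:
  assumes "upper_quasi_density H mu" "finite I" "\<And>i. i \<in> I \<Longrightarrow> A i \<subseteq> H"
  shows "mu (\<Union>i\<in>I. A i) \<le> (\<Sum>i\<in>I. mu (A i))"
  using assms(2,3)
proof (induction I rule: finite_induct)
  case empty then show ?case using uqd_empty[OF assms(1)] by simp
next
  case (insert x F)
  have "mu (A x \<union> (\<Union>i\<in>F. A i)) \<le> mu (A x) + mu (\<Union>i\<in>F. A i)"
    using uqd_sub[OF assms(1)] insert by (simp add: UN_least)
  then show ?case using insert by simp
qed

lemma uqd_class: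
  assumes "upper_quasi_density H mu" "Z \<subseteq> dil k H h" "k > 0" "h > 0"
  shows "mu Z \<le> 1 / real k"
proof -
  define Z' where "Z' = {x\<in>H. int k * x + int h \<in> Z}"
  have "Z = dil k Z' h" using assms(2) unfolding Z'_def dil_def by auto
  moreover have "Z' \<subseteq> H" unfolding Z'_def by auto
  ultimately have "mu Z = mu Z' / real k" "mu Z' \<le> 1"
    using uqd_dil[OF assms(1) _ assms(3,4), of Z'] uqd_le1[OF assms(1), of Z'] by auto
  thus ?thesis using assms(3) by (simp add: divide_right_mono)
qed

lemma uqd_bound:
  assumes "upper_quasi_density H mu" "Z \<subseteq> H" "finite E" "T \<subseteq> {1..k}" "k > 0"
    "Z \<subseteq> (\<Union>h\<in>T. dil k H h) \<union> E"
  shows "mu Z \<le> real (card T) / real k"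
proof -
  have fT: "finite T" using assms(4) finite_subset by blast
  have "Z = (\<Union>h\<in>T. Z \<inter> dil k H h) \<union> (Z \<inter> E)" using assms(6) by blast
  hence "mu Z \<le> mu (\<Union>h\<in>T. Z \<inter> dil k H h) + mu (Z \<inter> E)"
    using uqd_sub[OF assms(1), of "\<Union>h\<in>T. Z \<inter> dil k H h" "Z \<inter> E"] assms(2) by auto
  also have "mu (Z \<inter> E) \<le> 0" using uqd_finite[OF assms(1)] assms by auto
  also have "mu (\<Union>h\<in>T. Z \<inter> dil k H h) \<le> (\<Sum>h\<in>T. mu (Z \<inter> dil k H h))"
    by (rule uqd_union[OF assms(1) fT]) (use assms(2) in auto)
  also have "\<dots> \<le> (\<Sum>h\<in>T. 1 / real k)"
  proof (rule sum_mono)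
    fix h assume "h \<in> T"
    then show "mu (Z \<inter> dil k H h) \<le> 1 / real k"
      by (intro uqd_class[OF assms(1), where k=k and h=h]) (use assms(4,5) in auto)
  qed
  finally show ?thesis by simp
qed

lemma cover:
  assumes "admissible_H H" "k > 0"
  shows "finite (H - (\<Union>h\<in>{1..k}. dil k H h))"
proof -
  have "H - (\<Union>h\<in>{1..k}. dil k H h) \<subseteq> {0..<2 * int k}"
  proof
    fix z assume z: "z \<in> H - (\<Union>h\<in>{1..k}. dil k H h)"
    define h where "h = (z - 1) mod int k + 1"
    define x where "x = (z - 1) div int k"
    have h1: "1 \<le> h" "h \<le> int k"
    proof -
      have kp: "int k > 0" using assms(2) by simp
      show "1 \<le> h" "h \<le> int k" unfolding h_def
        using pos_mod_bound[OF kp, of "z-1"] pos_mod_sign[OF kp, of "z-1"] by auto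
    qed
    have zx: "z = int k * x + h" unfolding x_def h_def
      using div_mult_mod_eq[of "z - 1" "int k"] by (simp add: algebra_simps)
    show "z \<in> {0..<2 * int k}"
    proof (rule ccontr)
      assume nz: "z \<notin> {0..<2 * int k}"
      have "x \<in> H"
      proof -
        { assume "H = {0..}" hence "z \<ge> 2 * int k" using z nz by auto
          hence "int k * x \<ge> int k" using zx h1 by linarith
          hence "x \<ge> 1" using assms(2) mult_nonneg_nonpos[of "int k" x] by (cases "x \<ge> 1") auto
          hence "x \<in> H" using \<open>H = {0..}\<close> by auto }
        moreover
        { assume "H = {1..}" hence "z \<ge> 2 * int k" using z nz by auto
          hence "int k * x \<ge> int k" using zx h1 by linarith
          hence "x \<ge> 1" using assms(2) mult_nonneg_nonpos[of "int k" x] by (cases "x \<ge> 1") auto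
          hence "x \<in> H" using \<open>H = {1..}\<close> by auto }
        ultimately show ?thesis using assms(1) unfolding admissible_H_def by auto
      qed
      moreover have hk: "nat h \<in> {1..k}" using h1 by auto
      moreover have "z = int k * x + int (nat h)" using zx h1 by simp
      ultimately have "z \<in> dil k H (nat h)" unfolding mem_dil by blast
      then show False using z hk by blast
    qed
  qed
  thus ?thesis using finite_subset by blast
qed

lemma dich1:
  assumes adm: "admissible_H H" and "k > 0" "q > 0" "q dvd k"
  shows "finite (dil k H h \<inter> dil q H r) \<or> finite (dil k H h - dil q H r)"
proof -
  obtain c where c: "int k = int q * c" using assms(4) by (metis dvd_def of_nat_mult)
  show ?thesis
  proof (cases "int q dvd (int h - int r)")
    case True
    then obtain d where d: "int h - int r = int q * d" by (auto simp: dvd_def)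
    have "dil k H h - dil q H r \<subseteq> {0..<int q + int r}"
    proof
      fix z assume z: "z \<in> dil k H h - dil q H r"
      then obtain x where x: "x \<in> H" "z = int k * x + int h" by (auto simp: mem_dil)
      define y where "y = c * x + d"
      have zy: "z = int q * y + int r" using x c d by (simp add: y_def algebra_simps)
      show "z \<in> {0..<int q + int r}"
      proof (rule ccontr)
        assume nz: "z \<notin> {0..<int q + int r}"
        have "y \<in> H"
        proof -
          { assume H: "H \<noteq> UNIV"
            hence "H \<subseteq> {0..}" using adm unfolding admissible_H_def by auto
            hence "x \<ge> 0" using x by auto
            hence "z \<ge> 0" using x by simp
            hence "z \<ge> int q + int r" using nz by auto
            hence "int q * y \<ge> int q" using zy by linarith
            hence "y \<ge> 1" using assms(3) mult_nonneg_nonpos[of "int q" y] by (cases "y \<ge> 1") auto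
            hence "y \<in> H" using H adm unfolding admissible_H_def by auto }
          thus ?thesis by auto
        qed
        hence "z \<in> dil q H r" unfolding mem_dil using zy by blast
        thus False using z by blast
      qed
    qed
    thus ?thesis using finite_subset by blast
  next
    case False
    have "dil k H h \<inter> dil q H r = {}"
    proof (rule ccontr)
      assume "dil k H h \<inter> dil q H r \<noteq> {}"
      then obtain x y where "int k * x + int h = int q * y + int r" by (auto simp: mem_dil)
      hence "int h - int r = int q * (y - c * x)" using c by (simp add: algebra_simps)
      thus False using False by simp
    qed
    thus ?thesis by simp
  qed
qed

theorem mainTheorem7:
  fixes H X Y :: "int set" and mu :: "int set \<Rightarrow> real"
  assumes "admissible_H H"
    and "upper_quasi_density H mu"
    and "X \<subseteq> Y" and "Y \<subseteq> H"
    and "\<exists>F :: (nat \<times> nat) set. finite F \<and> (\<forall>(q, r) \<in> F. q > 0) \<and>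
           finite ((Y - (\<Union>(q, r) \<in> F. dil q H r)) \<union> ((\<Union>(q, r) \<in> F. dil q H r) - Y))"
  shows "mu X \<le> mu Y"
proof -
  note adm = assms(1) and uqd = assms(2)
  obtain F :: "(nat \<times> nat) set" where F: "finite F" "\<forall>(q, r) \<in> F. q > 0"
    and fin0: "finite ((Y - (\<Union>(q, r) \<in> F. dil q H r)) \<union> ((\<Union>(q, r) \<in> F. dil q H r) - Y))"
    using assms(5) by blast
  define U where "U = (\<Union>p\<in>F. dil (fst p) H (snd p))"
  have UU: "(\<Union>(q, r) \<in> F. dil q H r) = U" unfolding U_def by (auto simp: case_prod_beta)
  have finD: "finite ((Y - U) \<union> (U - Y))" using fin0 UU by simp
  define k where "k = (\<Prod>p\<in>F. fst p)"
  have Fpos: "\<And>p. p \<in> F \<Longrightarrow> fst p > 0" using F(2) by auto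
  have kpos: "k > 0" unfolding k_def using Fpos by (simp add: prod_pos)
  have kdvd: "\<And>p. p \<in> F \<Longrightarrow> fst p dvd k" unfolding k_def using F(1) by (simp add: dvd_prod_eqI)
  define C where "C = (\<lambda>h. dil k H h)"
  have dichU: "finite (C h \<inter> U) \<or> finite (C h - U)" for h
  proof (cases "\<exists>p\<in>F. \<not> finite (C h \<inter> dil (fst p) H (snd p))")
    case True
    then obtain p where p: "p \<in> F" "\<not> finite (C h \<inter> dil (fst p) H (snd p))" by blast
    hence "finite (C h - dil (fst p) H (snd p))"
      using dich1[OF adm kpos Fpos[OF p(1)] kdvd[OF p(1)], of h "snd p"] unfolding C_def by blast
    moreover have "C h - U \<subseteq> C h - dil (fst p) H (snd p)" unfolding U_def using p(1) by blast
    ultimately show ?thesis using finite_subset by blast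
  next
    case False
    have "C h \<inter> U = (\<Union>p\<in>F. C h \<inter> dil (fst p) H (snd p))" unfolding U_def by blast
    moreover have "finite (\<Union>p\<in>F. C h \<inter> dil (fst p) H (snd p))" using False F(1) by blast
    ultimately show ?thesis by simp
  qed
  have dichY: "finite (C h \<inter> Y) \<or> finite (C h - Y)" for h
  proof -
    have "C h \<inter> Y \<subseteq> (C h \<inter> U) \<union> ((Y - U) \<union> (U - Y))" by blast
    moreover have "C h - Y \<subseteq> (C h - U) \<union> ((Y - U) \<union> (U - Y))" by blast
    ultimately show ?thesis using dichU[of h] finD by (meson finite_UnI finite_subset)
  qed
  define T where "T = {h\<in>{1..k}. finite (C h - Y)}"
  define T' where "T' = {1..k} - T"
  define E0 where "E0 = H - (\<Union>h\<in>{1..k}. C h)"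
  have fE0: "finite E0" unfolding E0_def C_def using cover[OF adm kpos] .
  have TT: "T \<subseteq> {1..k}" "T' \<subseteq> {1..k}" unfolding T_def T'_def by auto
  have fT: "finite T" using TT finite_subset by blast
  have cardT': "card T' = k - card T" unfolding T'_def using TT fT by (simp add: card_Diff_subset)
  have cardT: "card T \<le> k" using TT card_mono[of "{1..k}" T] by simp
  define E1 where "E1 = E0 \<union> (\<Union>h\<in>T'. C h \<inter> Y)"
  have fE1: "finite E1" unfolding E1_def
  proof (intro finite_UnI fE0 finite_UN_I)
    show "finite T'" using TT finite_subset by blast
    fix h assume "h \<in> T'"
    thus "finite (C h \<inter> Y)" using dichY[of h] unfolding T'_def T_def by auto
  qed
  have XU: "X \<subseteq> (\<Union>h\<in>T. dil k H h) \<union> E1"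
  proof
    fix z assume "z \<in> X"
    hence zY: "z \<in> Y" "z \<in> H" using assms(3,4) by auto
    show "z \<in> (\<Union>h\<in>T. dil k H h) \<union> E1"
    proof (cases "z \<in> E0")
      case True thus ?thesis unfolding E1_def by blast
    next
      case False
      then obtain h where h: "h \<in> {1..k}" "z \<in> C h" using zY unfolding E0_def by blast
      show ?thesis
      proof (cases "h \<in> T")
        case True thus ?thesis using h unfolding C_def by blast
      next
        case False
        hence "h \<in> T'" using h unfolding T'_def by blast
        thus ?thesis using h zY unfolding E1_def by blast
      qed
    qed
  qed
  have muX: "mu X \<le> real (card T) / real k"
    by (rule uqd_bound[OF uqd _ fE1 TT(1) kpos XU]) (use assms(3,4) in blast)
  define E2 where "E2 = E0 \<union> (\<Union>h\<in>T. C h - Y)"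
  have fE2: "finite E2" unfolding E2_def
  proof (intro finite_UnI fE0 finite_UN_I fT)
    fix h assume "h \<in> T"
    thus "finite (C h - Y)" unfolding T_def by auto
  qed
  have HU: "H - Y \<subseteq> (\<Union>h\<in>T'. dil k H h) \<union> E2"
  proof
    fix z assume zH: "z \<in> H - Y"
    show "z \<in> (\<Union>h\<in>T'. dil k H h) \<union> E2"
    proof (cases "z \<in> E0")
      case True thus ?thesis unfolding E2_def by blast
    next
      case False
      then obtain h where h: "h \<in> {1..k}" "z \<in> C h" using zH unfolding E0_def by blast
      show ?thesis
      proof (cases "h \<in> T")
        case False
        hence "h \<in> T'" using h unfolding T'_def by blast
        thus ?thesis using h unfolding C_def by blast
      next
        case True
        thus ?thesis using h zH unfolding E2_def by blast
      qed
    qed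
  qed
  have muHY: "mu (H - Y) \<le> real (card T') / real k"
    by (rule uqd_bound[OF uqd _ fE2 TT(2) kpos HU]) blast
  have "1 = mu H" using uqd unfolding upper_quasi_density_def by simp
  also have "H = Y \<union> (H - Y)" using assms(4) by blast
  hence "mu H \<le> mu Y + mu (H - Y)" using uqd_sub[OF uqd assms(4), of "H - Y"] by simp
  finally have "1 \<le> mu Y + real (card T') / real k" using muHY by simp
  moreover have "real (card T') / real k = 1 - real (card T) / real k"
    using cardT' cardT kpos by (simp add: of_nat_diff diff_divide_distrib)
  ultimately show ?thesis using muX by simp
qed

end
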